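(* There is a constant $C>0$ such that for every $d\ge2$ and $h\ge1$, if $G$ is the rooted tree of depth $h$ in which every non-leaf vertex has exactly $d$ children and all leaves are at depth $h$, with $n$ vertices in total, then for every rule $\mathcal{R}$ the greedy random walk on $G$ started at the root satisfies $\mathbb{E}[C_E(G)]\le C\,n\log_d n$.
   Context: A greedy random walk (GRW) on a connected locally finite graph $G=(V,E)$ with rule $\mathcal{R}$ started at $v_0$: $X_0=v_0$; with $H_t=\{\{X_{s-1},X_s\}:0<s\le t\}$ and $J_t(v)=\{e\in E: v\in e, e\notin H_t\}$, if $J_t(X_t)\ne\emptyset$ then $X_{t+1}=w$ for some $w$ with $\{X_t,w\}\in J_t(X_t)$, chosen according to an arbitrary (possibly randomized, history-dependent) rule $\mathcal{R}$; if $J_t(X_t)=\emptyset$ then $X_{t+1}$ is a uniformly random neighbor of $X_t$. $C_E(G)=\min\{t:H_t=E\}$ is the edge cover time. *)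

theory Defs
  imports "HOL-Probability.Probability"
begin

text \<open>A graph is given by its edge set E (each edge a two-element set of vertices).
  A history is the list [X_0, ..., X_t] of visited vertices (oldest first).\<close>

definition neighbours :: "'a set set \<Rightarrow> 'a \<Rightarrow> 'a set" where
  "neighbours E v = {w. {v, w} \<in> E}"

definition used_edges :: "'a list \<Rightarrow> 'a set set" where
  "used_edges hist = {{hist ! (s - 1), hist ! s} | s. 0 < s \<and> s < length hist}"

definition unused_at :: "'a set set \<Rightarrow> 'a list \<Rightarrow> 'a \<Rightarrow> 'a set set" where
  "unused_at E hist v = {e \<in> E. v \<in> e \<and> e \<notin> used_edges hist}"

definition valid_rule :: "'a set set \<Rightarrow> ('a list \<Rightarrow> 'a pmf) \<Rightarrow> bool" where
  "valid_rule E R \<longleftrightarrow> (\<forall>hist. unused_at E hist (last hist) \<noteq> {} \<longrightarrow>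
      set_pmf (R hist) \<subseteq> {w. {last hist, w} \<in> unused_at E hist (last hist)})"

definition grw_step :: "'a set set \<Rightarrow> ('a list \<Rightarrow> 'a pmf) \<Rightarrow> 'a list \<Rightarrow> 'a list pmf" where
  "grw_step E R hist =
     map_pmf (\<lambda>w. hist @ [w])
       (if unused_at E hist (last hist) \<noteq> {} then R hist
        else pmf_of_set (neighbours E (last hist)))"

definition grw_hist :: "'a set set \<Rightarrow> ('a list \<Rightarrow> 'a pmf) \<Rightarrow> 'a \<Rightarrow> nat \<Rightarrow> 'a list pmf" where
  "grw_hist E R v0 t = ((\<lambda>p. bind_pmf p (grw_step E R)) ^^ t) (return_pmf [v0])"

text \<open>Expected edge cover time, via E[C_E] = sum_t P(C_E > t), where
  C_E > t iff H_t \<noteq> E (valued in [0,\<infinity>]).\<close>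
definition expected_edge_cover_time ::
  "'a set set \<Rightarrow> ('a list \<Rightarrow> 'a pmf) \<Rightarrow> 'a \<Rightarrow> ennreal" where
  "expected_edge_cover_time E R v0 =
     (\<Sum>t. ennreal (measure_pmf.prob (grw_hist E R v0 t) {hist. used_edges hist \<noteq> E}))"

text \<open>Vertices: words over {0..<d} of length at most h; root is []; the children of
  v are i # v for i < d.\<close>
definition tree_verts :: "nat \<Rightarrow> nat \<Rightarrow> nat list set" where
  "tree_verts d h = {v. length v \<le> h \<and> set v \<subseteq> {..<d}}"

definition tree_edges :: "nat \<Rightarrow> nat \<Rightarrow> nat list set set" where
  "tree_edges d h = {{v, i # v} | v i. i < d \<and> length v < h \<and> set v \<subseteq> {..<d}}"

end

theory Submission imports Defs begin

definition isanc :: "nat list \<Rightarrow> nat list \<Rightarrow> bool" where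
  "isanc x y \<longleftrightarrow> (\<exists>zs. y = zs @ x)"

context fixes d h :: nat begin

abbreviation "VS \<equiv> tree_verts d h"
abbreviation "ES \<equiv> tree_edges d h"

definition sub :: "nat list \<Rightarrow> nat list set" where
  "sub x = {y \<in> VS. isanc x y}"
definition NN :: "nat list \<Rightarrow> nat" where "NN x = card (sub x)"
definition full :: "nat list set \<Rightarrow> nat list \<Rightarrow> bool" where "full V x \<longleftrightarrow> sub x \<subseteq> V"
definition Ch :: "nat list \<Rightarrow> nat list set" where
  "Ch v = (if length v < h then (\<lambda>i. i # v) ` {..<d} else {})"
definition UU :: "nat list set \<Rightarrow> nat list set" where
  "UU V = {y \<in> V. length y < h \<and> (\<exists>i<d. i # y \<notin> V)}"

lemma finite_VS: "finite VS"
proof -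
  have "VS = {xs. set xs \<subseteq> {..<d} \<and> length xs \<le> h}" by (auto simp: tree_verts_def)
  thus ?thesis using finite_lists_length_le[of "{..<d}" h] by simp
qed

lemma finite_sub: "finite (sub x)" using finite_VS by (simp add: sub_def)

lemma self_sub: "x \<in> VS \<Longrightarrow> x \<in> sub x" by (auto simp: sub_def isanc_def)

lemma NN_pos: "x \<in> VS \<Longrightarrow> NN x \<ge> 1"
  using self_sub finite_sub by (metis NN_def card_0_eq empty_iff less_one not_le)

lemma VS_Cons: "i # v \<in> VS \<longleftrightarrow> i < d \<and> v \<in> VS \<and> length v < h"
  by (auto simp: tree_verts_def)

lemma Ch_VS: "v \<in> VS \<Longrightarrow> c \<in> Ch v \<Longrightarrow> c \<in> VS"
  by (auto simp: Ch_def VS_Cons split: if_splits)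

lemma finite_Ch: "finite (Ch v)" by (simp add: Ch_def)

lemma card_Ch: "card (Ch v) = (if length v < h then d else 0)"
  by (auto simp: Ch_def card_image inj_on_def)

lemma sub_split: assumes "v \<in> VS"
  shows "sub v = insert v (\<Union>c\<in>Ch v. sub c)"
proof
  show "sub v \<subseteq> insert v (\<Union>c\<in>Ch v. sub c)"
  proof
    fix y assume y: "y \<in> sub v"
    then obtain zs where yz: "y = zs @ v" and yV: "y \<in> VS" by (auto simp: sub_def isanc_def)
    show "y \<in> insert v (\<Union>c\<in>Ch v. sub c)"
    proof (cases zs rule: rev_cases)
      case Nil thus ?thesis using yz by simp
    next
      case (snoc ys i)
      have "i # v \<in> VS" using yV yz snoc by (auto simp: tree_verts_def)
      hence "i # v \<in> Ch v" by (auto simp: Ch_def VS_Cons)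
      moreover have "y \<in> sub (i # v)" using yV yz snoc by (auto simp: sub_def isanc_def)
      ultimately show ?thesis by blast
    qed
  qed
next
  show "insert v (\<Union>c\<in>Ch v. sub c) \<subseteq> sub v"
    using assms by (auto simp: sub_def isanc_def Ch_def split: if_splits)
qed

lemma NN_split: assumes "v \<in> VS" shows "NN v = 1 + (\<Sum>c\<in>Ch v. NN c)"
proof -
  have disj: "\<forall>c1\<in>Ch v. \<forall>c2\<in>Ch v. c1 \<noteq> c2 \<longrightarrow> sub c1 \<inter> sub c2 = {}"
  proof (intro ballI impI)
    fix c1 c2 assume "c1 \<in> Ch v" "c2 \<in> Ch v" "c1 \<noteq> c2"
    then obtain i j where ij: "c1 = i # v" "c2 = j # v" "i \<noteq> j" by (auto simp: Ch_def split: if_splits)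
    have "sub c1 \<inter> sub c2 = {}"
    proof (rule ccontr)
      assume "sub c1 \<inter> sub c2 \<noteq> {}"
      then obtain y zs ws where "y = zs @ i # v" "y = ws @ j # v" using ij by (auto simp: sub_def isanc_def)
      hence "(zs @ [i]) @ v = (ws @ [j]) @ v" by simp
      hence "zs @ [i] = ws @ [j]" by (simp only: append_same_eq)
      thus False using ij by simp
    qed
    thus "sub c1 \<inter> sub c2 = {}" .
  qed
  have nv: "v \<notin> (\<Union>c\<in>Ch v. sub c)"
    by (auto simp: Ch_def sub_def isanc_def split: if_splits)
  have "NN v = card (insert v (\<Union>c\<in>Ch v. sub c))" using sub_split[OF assms] by (simp add: NN_def)
  also have "\<dots> = 1 + card (\<Union>c\<in>Ch v. sub c)" using nv finite_Ch finite_sub by simp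
  also have "card (\<Union>c\<in>Ch v. sub c) = (\<Sum>c\<in>Ch v. NN c)"
    unfolding NN_def by (rule card_UN_disjoint[OF finite_Ch]) (use finite_sub disj in auto)
  finally show ?thesis .
qed

lemma edge_iff: "{a,b} \<in> ES \<longleftrightarrow>
   (a \<in> VS \<and> length a < h \<and> (\<exists>i<d. b = i#a)) \<or> (b \<in> VS \<and> length b < h \<and> (\<exists>i<d. a = i#b))"
proof
  assume "{a,b} \<in> ES"
  then obtain v i where vi: "{a,b} = {v, i#v}" "i < d" "length v < h" "set v \<subseteq> {..<d}"
    unfolding tree_edges_def by blast
  have vV: "v \<in> VS" using vi by (simp add: tree_verts_def)
  from vi(1) have "(a = v \<and> b = i#v) \<or> (a = i#v \<and> b = v)" by (simp add: doubleton_eq_iff)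
  thus "(a \<in> VS \<and> length a < h \<and> (\<exists>i<d. b = i#a)) \<or> (b \<in> VS \<and> length b < h \<and> (\<exists>i<d. a = i#b))"
    using vV vi by blast
next
  assume "(a \<in> VS \<and> length a < h \<and> (\<exists>i<d. b = i#a)) \<or> (b \<in> VS \<and> length b < h \<and> (\<exists>i<d. a = i#b))"
  thus "{a,b} \<in> ES"
  proof
    assume "a \<in> VS \<and> length a < h \<and> (\<exists>i<d. b = i#a)"
    then obtain i where "i < d" "b = i # a" "length a < h" "set a \<subseteq> {..<d}" by (auto simp: tree_verts_def)
    thus ?thesis unfolding tree_edges_def by blast
  next
    assume "b \<in> VS \<and> length b < h \<and> (\<exists>i<d. a = i#b)"
    then obtain i where "i < d" "a = i # b" "length b < h" "set b \<subseteq> {..<d}" by (auto simp: tree_verts_def)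
    hence "{a,b} = {b, i#b}" "i < d" "length b < h" "set b \<subseteq> {..<d}" by auto
    thus ?thesis unfolding tree_edges_def by blast
  qed
qed

lemma nbrs: assumes "v \<in> VS"
  shows "neighbours ES v = (if v = [] then {} else {tl v}) \<union> Ch v"
proof -
  have "w \<in> neighbours ES v \<longleftrightarrow> w \<in> (if v = [] then {} else {tl v}) \<union> Ch v" for w
  proof -
    have "w \<in> neighbours ES v \<longleftrightarrow> {v,w} \<in> ES" by (simp add: neighbours_def)
    also have "\<dots> \<longleftrightarrow> (v \<in> VS \<and> length v < h \<and> (\<exists>i<d. w = i#v)) \<or> (w \<in> VS \<and> length w < h \<and> (\<exists>i<d. v = i#w))"
      by (rule edge_iff)
    also have "\<dots> \<longleftrightarrow> w \<in> (if v = [] then {} else {tl v}) \<union> Ch v"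
    proof (cases v)
      case Nil thus ?thesis using assms by (auto simp: Ch_def)
    next
      case (Cons j u)
      have "(w \<in> VS \<and> length w < h \<and> (\<exists>i<d. v = i#w)) \<longleftrightarrow> w = u"
        using assms Cons by (auto simp: VS_Cons)
      moreover have "(v \<in> VS \<and> length v < h \<and> (\<exists>i<d. w = i#v)) \<longleftrightarrow> w \<in> Ch v"
        using assms by (auto simp: Ch_def)
      ultimately show ?thesis using Cons by auto
    qed
    finally show ?thesis .
  qed
  thus ?thesis by blast
qed

lemma used_edges_snoc: assumes "hist \<noteq> []"
  shows "used_edges (hist @ [w]) = insert {last hist, w} (used_edges hist)"
proof -
  have "used_edges (hist @ [w]) = {{(hist @ [w]) ! (s - 1), (hist @ [w]) ! s} | s. 0 < s \<and> s < Suc (length hist)}"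
    by (simp add: used_edges_def)
  also have "\<dots> = insert {last hist, w} (used_edges hist)"
  proof (rule set_eqI, rule iffI)
    fix e assume "e \<in> {{(hist @ [w]) ! (s - 1), (hist @ [w]) ! s} | s. 0 < s \<and> s < Suc (length hist)}"
    then obtain s where s: "0 < s" "s < Suc (length hist)" "e = {(hist @ [w]) ! (s - 1), (hist @ [w]) ! s}" by blast
    show "e \<in> insert {last hist, w} (used_edges hist)"
    proof (cases "s = length hist")
      case True thus ?thesis using s assms by (simp add: nth_append last_conv_nth)
    next
      case False thus ?thesis using s by (auto simp: nth_append used_edges_def)
    qed
  next
    fix e assume "e \<in> insert {last hist, w} (used_edges hist)"
    thus "e \<in> {{(hist @ [w]) ! (s - 1), (hist @ [w]) ! s} | s. 0 < s \<and> s < Suc (length hist)}"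
    proof
      assume "e = {last hist, w}"
      thus ?thesis using assms
        by (intro CollectI exI[of _ "length hist"]) (auto simp: nth_append last_conv_nth)
    next
      assume "e \<in> used_edges hist"
      then obtain s where "0 < s" "s < length hist" "e = {hist ! (s - 1), hist ! s}" by (auto simp: used_edges_def)
      thus ?thesis by (intro CollectI exI[of _ s]) (auto simp: nth_append)
    qed
  qed
  finally show ?thesis .
qed

definition Inv :: "nat list list \<Rightarrow> bool" where
  "Inv hist \<longleftrightarrow> hist \<noteq> [] \<and> set hist \<subseteq> VS \<and> [] \<in> set hist \<and>
     (\<forall>x\<in>set hist. x \<noteq> [] \<longrightarrow> tl x \<in> set hist) \<and>
     used_edges hist = {{x, tl x} | x. x \<in> set hist \<and> x \<noteq> []} \<and>
     (\<forall>y\<in>UU (set hist). isanc y (last hist))"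

lemma Inv_init: "Inv [[]]"
  by (auto simp: Inv_def used_edges_def UU_def isanc_def tree_verts_def)

lemma tl_neq: "x \<noteq> [] \<Longrightarrow> tl x \<noteq> x"
  by (cases x) auto

lemma edge_used_iff: assumes "x \<noteq> []" "y \<noteq> []"
  shows "{x, tl x} = {y, tl y} \<longleftrightarrow> x = y"
proof
  assume a: "{x, tl x} = {y, tl y}"
  show "x = y"
  proof (rule ccontr)
    assume "x \<noteq> y"
    hence "x = tl y" "tl x = y" using a by (auto simp: doubleton_eq_iff)
    hence "length y = length y - 2" by (metis diff_diff_left length_tl one_add_one)
    thus False using assms(2) by (cases y) auto
  qed
qed simp

lemma in_used: "Inv hist \<Longrightarrow> x \<in> set hist \<Longrightarrow> x \<noteq> [] \<Longrightarrow> {x, tl x} \<in> used_edges hist"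
  unfolding Inv_def by auto

lemma used_E: "Inv hist \<Longrightarrow> e \<in> used_edges hist \<Longrightarrow> \<exists>x. x \<in> set hist \<and> x \<noteq> [] \<and> e = {x, tl x}"
  unfolding Inv_def by auto

lemma unused_iff: assumes I: "Inv hist"
  shows "unused_at ES hist (last hist) \<noteq> {} \<longleftrightarrow> last hist \<in> UU (set hist)"
proof -
  let ?v = "last hist" and ?V = "set hist"
  have vV: "?v \<in> ?V" using I by (simp add: Inv_def)
  have vVS: "?v \<in> VS" using I vV by (auto simp: Inv_def)
  have used: "used_edges hist = {{x, tl x} | x. x \<in> ?V \<and> x \<noteq> []}" using I by (simp add: Inv_def)
  show ?thesis
  proof
    assume "unused_at ES hist ?v \<noteq> {}"
    then obtain e where e: "e \<in> ES" "?v \<in> e" "e \<notin> used_edges hist" by (auto simp: unused_at_def)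
    obtain a i where ai: "e = {a, i # a}" "i < d" "length a < h" "set a \<subseteq> {..<d}"
      using e(1) by (auto simp: tree_edges_def)
    show "?v \<in> UU ?V"
    proof (cases "?v = a")
      case True
      have "i # a \<notin> ?V"
      proof
        assume "i # a \<in> ?V"
        hence "{i # a, tl (i#a)} \<in> used_edges hist" using in_used[OF I] by blast
        thus False using e(3) ai by (simp add: insert_commute)
      qed
      thus ?thesis using True ai vV by (auto simp: UU_def)
    next
      case False
      hence "?v = i # a" using e(2) ai by auto
      hence "e = {?v, tl ?v}" using ai by auto
      moreover have "{?v, tl ?v} \<in> used_edges hist" using in_used[OF I vV] \<open>?v = i # a\<close> by simp
      ultimately show ?thesis using e(3) by simp
    qed
  next
    assume "?v \<in> UU ?V"
    then obtain i where i: "i < d" "length ?v < h" "i # ?v \<notin> ?V" by (auto simp: UU_def)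
    have "{?v, i # ?v} \<in> ES" using edge_iff vVS i by auto
    moreover have "{?v, i # ?v} \<notin> used_edges hist"
    proof
      assume "{?v, i # ?v} \<in> used_edges hist"
      then obtain x where x: "x \<in> ?V" "x \<noteq> []" "{?v, i # ?v} = {x, tl x}" using used_E[OF I] by blast
      have "x = i # ?v" using edge_used_iff[of "i # ?v" x] x by (simp add: insert_commute)
      thus False using x i by simp
    qed
    ultimately show "unused_at ES hist ?v \<noteq> {}" by (auto simp: unused_at_def)
  qed
qed

lemma greedy_choice: assumes I: "Inv hist" and R: "valid_rule ES R"
  and U: "last hist \<in> UU (set hist)" and w: "w \<in> set_pmf (R hist)"
  shows "\<exists>i<d. w = i # last hist \<and> length (last hist) < h \<and> w \<notin> set hist"
proof -
  let ?v = "last hist" and ?V = "set hist"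
  have vV: "?v \<in> ?V" using I by (simp add: Inv_def)
  have used: "used_edges hist = {{x, tl x} | x. x \<in> ?V \<and> x \<noteq> []}" using I by (simp add: Inv_def)
  have "unused_at ES hist ?v \<noteq> {}" using unused_iff[OF I] U by simp
  hence "{?v, w} \<in> unused_at ES hist ?v" using R w by (auto simp: valid_rule_def)
  hence e: "{?v, w} \<in> ES" "{?v, w} \<notin> used_edges hist" by (auto simp: unused_at_def)
  from e(1)[unfolded edge_iff] show ?thesis
  proof
    assume "?v \<in> VS \<and> length ?v < h \<and> (\<exists>i<d. w = i # ?v)"
    then obtain i where i: "i < d" "w = i # ?v" "length ?v < h" by blast
    have "w \<notin> ?V"
    proof
      assume "w \<in> ?V"
      hence "{w, tl w} \<in> used_edges hist" using in_used[OF I, of w] i by simp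
      thus False using e(2) i by (simp add: insert_commute)
    qed
    thus ?thesis using i by blast
  next
    assume "w \<in> VS \<and> length w < h \<and> (\<exists>i<d. ?v = i # w)"
    then obtain i where "?v = i # w" by blast
    hence "{?v, w} = {?v, tl ?v}" "?v \<noteq> []" by auto
    hence "{?v, w} \<in> used_edges hist" using in_used[OF I vV] by simp
    thus ?thesis using e(2) by simp
  qed
qed

lemma Inv_greedy: assumes I: "Inv hist" and i: "i < d" "length (last hist) < h" "i # last hist \<notin> set hist"
  shows "Inv (hist @ [i # last hist])"
proof -
  let ?v = "last hist" and ?V = "set hist" and ?w = "i # last hist"
  have ne: "hist \<noteq> []" and VS: "?V \<subseteq> VS" and vV: "?v \<in> ?V" using I by (auto simp: Inv_def)
  have wVS: "?w \<in> VS" using VS vV i by (auto simp: VS_Cons)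
  have set': "set (hist @ [?w]) = insert ?w ?V" by simp
  have used: "used_edges hist = {{x, tl x} | x. x \<in> ?V \<and> x \<noteq> []}" using I by (simp add: Inv_def)
  have "used_edges (hist @ [?w]) = insert {?w, tl ?w} (used_edges hist)"
    using used_edges_snoc[OF ne] by (simp add: insert_commute)
  also have "\<dots> = {{x, tl x} | x. x \<in> insert ?w ?V \<and> x \<noteq> []}" unfolding used by blast
  finally have used': "used_edges (hist @ [?w]) = {{x, tl x} | x. x \<in> set (hist @ [?w]) \<and> x \<noteq> []}"
    by simp
  have U': "\<forall>y\<in>UU (set (hist @ [?w])). isanc y (last (hist @ [?w]))"
  proof
    fix y assume y: "y \<in> UU (set (hist @ [?w]))"
    show "isanc y (last (hist @ [?w]))"
    proof (cases "y = ?w")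
      case True thus ?thesis by (simp add: isanc_def)
    next
      case False
      hence "y \<in> UU ?V" using y by (auto simp: UU_def)
      hence "isanc y ?v" using I by (auto simp: Inv_def)
      then obtain zs where "?v = zs @ y" by (auto simp: isanc_def)
      hence "?w = (i # zs) @ y" by simp
      thus ?thesis by (auto simp: isanc_def)
    qed
  qed
  show ?thesis unfolding Inv_def
    using I wVS used' U' by (auto simp: Inv_def)
qed

lemma Inv_random: assumes I: "Inv hist" and nU: "last hist \<notin> UU (set hist)"
  and w: "w \<in> neighbours ES (last hist)"
  shows "Inv (hist @ [w])" and "w \<in> set hist"
proof -
  let ?v = "last hist" and ?V = "set hist"
  have ne: "hist \<noteq> []" and VS: "?V \<subseteq> VS" and vV: "?v \<in> ?V" using I by (auto simp: Inv_def)
  have vVS: "?v \<in> VS" using VS vV by auto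
  have w': "(?v \<noteq> [] \<and> w = tl ?v) \<or> w \<in> Ch ?v" using w nbrs[OF vVS] by (auto split: if_splits)
  show wV: "w \<in> ?V"
    using w'
  proof
    assume "?v \<noteq> [] \<and> w = tl ?v" thus ?thesis using I vV by (auto simp: Inv_def)
  next
    assume "w \<in> Ch ?v"
    then obtain i where "i < d" "length ?v < h" "w = i # ?v" by (auto simp: Ch_def split: if_splits)
    thus ?thesis using nU vV by (auto simp: UU_def)
  qed
  have edge_old: "{?v, w} \<in> used_edges hist"
    using w'
  proof
    assume a: "?v \<noteq> [] \<and> w = tl ?v"
    show ?thesis using in_used[OF I vV] a by simp
  next
    assume "w \<in> Ch ?v"
    then obtain i where "w = i # ?v" by (auto simp: Ch_def split: if_splits)
    thus ?thesis using in_used[OF I wV] by (simp add: insert_commute)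
  qed
  have set': "set (hist @ [w]) = ?V" using wV by auto
  have used': "used_edges (hist @ [w]) = used_edges hist"
    using used_edges_snoc[OF ne] edge_old by auto
  have U': "\<forall>y\<in>UU (set (hist @ [w])). isanc y (last (hist @ [w]))"
  proof
    fix y assume "y \<in> UU (set (hist @ [w]))"
    hence y: "y \<in> UU ?V" using set' by simp
    hence "isanc y ?v" using I by (auto simp: Inv_def)
    then obtain zs where zs: "?v = zs @ y" by (auto simp: isanc_def)
    have "zs \<noteq> []" using zs y nU by auto
    show "isanc y (last (hist @ [w]))"
      using w'
    proof
      assume "?v \<noteq> [] \<and> w = tl ?v"
      hence "w = tl zs @ y" using zs \<open>zs \<noteq> []\<close> by simp
      thus ?thesis by (auto simp: isanc_def)
    next
      assume "w \<in> Ch ?v"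
      then obtain i where "w = i # ?v" by (auto simp: Ch_def split: if_splits)
      hence "w = (i # zs) @ y" using zs by simp
      thus ?thesis by (auto simp: isanc_def)
    qed
  qed
  show "Inv (hist @ [w])" using I set' used' U' by (auto simp: Inv_def)
qed

definition FF :: "nat list set \<Rightarrow> nat" where
  "FF V = (\<Sum>x | x \<in> VS \<and> x \<noteq> [] \<and> \<not> full V x. 2 * NN x) + card (VS - V)"
definition TT :: "nat list set \<Rightarrow> nat list \<Rightarrow> nat" where
  "TT V v = (\<Sum>x | x \<in> VS \<and> x \<noteq> [] \<and> isanc x v \<and> full V x. 2 * NN x - 1)"
definition Phi :: "nat list list \<Rightarrow> nat" where
  "Phi hist = FF (set hist) + TT (set hist) (last hist)"
definition Psi :: "nat list list \<Rightarrow> nat" where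
  "Psi hist = (if set hist = VS then 0 else Phi hist)"

lemma isanc_Cons: "isanc x (i # v) \<longleftrightarrow> x = i # v \<or> isanc x v"
proof
  assume "isanc x (i # v)"
  then obtain zs where zs: "i # v = zs @ x" by (auto simp: isanc_def)
  show "x = i # v \<or> isanc x v"
  proof (cases zs)
    case Nil thus ?thesis using zs by simp
  next
    case (Cons a zs') thus ?thesis using zs by (auto simp: isanc_def)
  qed
next
  assume "x = i # v \<or> isanc x v"
  thus "isanc x (i # v)" by (auto simp: isanc_def intro: exI[of _ "i # _"] exI[of _ "[]"])
qed

lemma isanc_tl: "v \<noteq> [] \<Longrightarrow> isanc x v \<longleftrightarrow> x = v \<or> isanc x (tl v)"
  using isanc_Cons[of x "hd v" "tl v"] by simp

lemma isanc_len: "isanc x y \<Longrightarrow> length x \<le> length y"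
  by (auto simp: isanc_def)

lemma finite_sub_VS: "finite {x. x \<in> VS \<and> P x}"
  using finite_VS by simp

lemma greedy_drift: assumes I: "Inv hist" and i: "i < d" "length (last hist) < h" "i # last hist \<notin> set hist"
  shows "Phi (hist @ [i # last hist]) + 1 \<le> Phi hist"
proof -
  let ?v = "last hist" and ?V = "set hist" and ?w = "i # last hist"
  let ?V' = "insert ?w ?V"
  have VS: "?V \<subseteq> VS" and vV: "?v \<in> ?V" using I by (auto simp: Inv_def)
  have wVS: "?w \<in> VS" using VS vV i by (auto simp: VS_Cons)
  define A where "A = {x. x \<in> VS \<and> x \<noteq> [] \<and> \<not> full ?V x}"
  define A' where "A' = {x. x \<in> VS \<and> x \<noteq> [] \<and> \<not> full ?V' x}"
  define B where "B = {x. x \<in> VS \<and> x \<noteq> [] \<and> isanc x ?w \<and> full ?V' x}"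
  have fA: "finite A" unfolding A_def by (rule finite_sub_VS)
  have A'A: "A' \<subseteq> A" unfolding A_def A'_def full_def by auto
  have BA: "B \<subseteq> A - A'"
  proof
    fix x assume x: "x \<in> B"
    have "?w \<in> sub x" using x wVS by (auto simp: B_def sub_def)
    hence "\<not> full ?V x" using i(3) by (auto simp: full_def)
    thus "x \<in> A - A'" using x by (auto simp: A_def A'_def B_def)
  qed
  have sA: "(\<Sum>x\<in>A. 2 * NN x) = (\<Sum>x\<in>A'. 2 * NN x) + (\<Sum>x\<in>A - A'. 2 * NN x)"
    using sum.subset_diff[OF A'A fA, of "\<lambda>x. 2 * NN x"] by linarith
  have "TT ?V' ?w = (\<Sum>x\<in>B. 2 * NN x - 1)" by (simp add: TT_def B_def)
  also have "\<dots> \<le> (\<Sum>x\<in>B. 2 * NN x)" by (rule sum_mono) simp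
  also have "\<dots> \<le> (\<Sum>x\<in>A - A'. 2 * NN x)" by (rule sum_mono2) (use fA BA in auto)
  finally have TB: "TT ?V' ?w \<le> (\<Sum>x\<in>A - A'. 2 * NN x)" .
  have T0: "TT ?V ?v = 0"
  proof -
    have e: "{x. x \<in> VS \<and> x \<noteq> [] \<and> isanc x ?v \<and> full ?V x} = {}"
    proof (rule ccontr)
      assume "{x. x \<in> VS \<and> x \<noteq> [] \<and> isanc x ?v \<and> full ?V x} \<noteq> {}"
      then obtain x where x: "isanc x ?v" "full ?V x" by blast
      have "isanc x ?w" using x(1) isanc_Cons by blast
      hence "?w \<in> sub x" using wVS by (auto simp: sub_def)
      thus False using x(2) i(3) by (auto simp: full_def)
    qed
    show ?thesis unfolding TT_def e by simp
  qed
  have cV: "card (VS - ?V) = card (VS - ?V') + 1"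
  proof -
    have e: "VS - ?V = insert ?w (VS - ?V')" using wVS i(3) by blast
    have n: "?w \<notin> VS - ?V'" by blast
    have f: "finite (VS - ?V')" using finite_VS by (rule finite_Diff)
    show ?thesis unfolding e using card_insert_disjoint[OF f n] by simp
  qed
  have "Phi hist = (\<Sum>x\<in>A. 2 * NN x) + card (VS - ?V)"
    by (simp add: Phi_def FF_def T0 A_def)
  moreover have "Phi (hist @ [?w]) = (\<Sum>x\<in>A'. 2 * NN x) + card (VS - ?V') + TT ?V' ?w"
    by (simp add: Phi_def FF_def A'_def)
  ultimately show ?thesis using sA TB cV by linarith
qed

lemma full_of_noU: assumes I: "Inv hist" and x: "x \<in> set hist" and nU: "\<forall>y\<in>sub x. y \<notin> UU (set hist)"
  shows "full (set hist) x"
proof -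
  have "zs @ x \<in> VS \<Longrightarrow> zs @ x \<in> set hist" for zs
  proof (induction zs)
    case Nil thus ?case using x by simp
  next
    case (Cons a zs)
    have "zs @ x \<in> VS" using Cons.prems by (auto simp: tree_verts_def)
    hence in1: "zs @ x \<in> set hist" using Cons.IH by simp
    have "zs @ x \<in> sub x" using \<open>zs @ x \<in> VS\<close> by (auto simp: sub_def isanc_def)
    hence "zs @ x \<notin> UU (set hist)" using nU by blast
    moreover have "a < d" "length (zs @ x) < h" using Cons.prems by (auto simp: tree_verts_def)
    ultimately show ?case using in1 by (auto simp: UU_def)
  qed
  thus ?thesis by (auto simp: full_def sub_def isanc_def)
qed

lemma sub_root: "sub [] = VS" by (auto simp: sub_def isanc_def)

lemma random_facts: assumes I: "Inv hist" and nU: "last hist \<notin> UU (set hist)" and nc: "set hist \<noteq> VS"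
  shows "last hist \<noteq> []" "full (set hist) (last hist)" "\<And>c. c \<in> Ch (last hist) \<Longrightarrow> full (set hist) c"
proof -
  let ?v = "last hist" and ?V = "set hist"
  have VS: "?V \<subseteq> VS" and vV: "?v \<in> ?V" using I by (auto simp: Inv_def)
  have Uanc: "\<forall>y\<in>UU ?V. isanc y ?v" using I by (simp add: Inv_def)
  have fv: "full ?V ?v"
  proof (rule full_of_noU[OF I vV], intro ballI notI)
    fix y assume "y \<in> sub ?v" "y \<in> UU ?V"
    hence "isanc ?v y" "isanc y ?v" using Uanc by (auto simp: sub_def)
    then obtain zs ws where "y = zs @ ?v" "?v = ws @ y" by (auto simp: isanc_def)
    hence "y = ?v" by simp
    thus False using nU \<open>y \<in> UU ?V\<close> by simp
  qed
  thus "full ?V ?v" .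
  show "?v \<noteq> []"
  proof
    assume "?v = []"
    hence "VS \<subseteq> ?V" using fv sub_root by (simp add: full_def)
    thus False using VS nc by auto
  qed
  fix c assume c: "c \<in> Ch ?v"
  then obtain i where ci: "c = i # ?v" "i < d" "length ?v < h" by (auto simp: Ch_def split: if_splits)
  have cV: "c \<in> ?V" using nU vV ci by (auto simp: UU_def)
  show "full ?V c"
  proof (rule full_of_noU[OF I cV], intro ballI notI)
    fix y assume "y \<in> sub c" "y \<in> UU ?V"
    hence "isanc c y" "isanc y ?v" using Uanc by (auto simp: sub_def)
    hence "length c \<le> length ?v" using isanc_len[of c y] isanc_len[of y ?v] by linarith
    thus False using ci by simp
  qed
qed

lemma TT_tl: assumes "v \<noteq> []" "v \<in> VS" "full V v"
  shows "TT V (tl v) + (2 * NN v - 1) = TT V v"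
proof -
  have eq: "{x. x \<in> VS \<and> x \<noteq> [] \<and> isanc x v \<and> full V x} = insert v {x. x \<in> VS \<and> x \<noteq> [] \<and> isanc x (tl v) \<and> full V x}"
    using assms isanc_tl[OF assms(1)] by auto
  have nin: "v \<notin> {x. x \<in> VS \<and> x \<noteq> [] \<and> isanc x (tl v) \<and> full V x}"
    using isanc_len[of v "tl v"] assms(1) by (cases v) auto
  show ?thesis unfolding TT_def eq using nin finite_sub_VS by simp
qed

lemma TT_child: assumes "c \<in> Ch v" "v \<in> VS" "full V c"
  shows "TT V c = TT V v + (2 * NN c - 1)"
proof -
  obtain i where ci: "c = i # v" using assms(1) by (auto simp: Ch_def split: if_splits)
  have cVS: "c \<in> VS" using Ch_VS assms by blast
  have eq: "{x. x \<in> VS \<and> x \<noteq> [] \<and> isanc x c \<and> full V x} = insert c {x. x \<in> VS \<and> x \<noteq> [] \<and> isanc x v \<and> full V x}"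
    using assms cVS ci isanc_Cons[of _ i v] by auto
  have nin: "c \<notin> {x. x \<in> VS \<and> x \<noteq> [] \<and> isanc x v \<and> full V x}"
    using isanc_len[of c v] ci by auto
  show ?thesis unfolding TT_def eq using nin finite_sub_VS by simp
qed

lemma random_drift: assumes I: "Inv hist" and nU: "last hist \<notin> UU (set hist)" and nc: "set hist \<noteq> VS"
  shows "(\<Sum>w\<in>neighbours ES (last hist). Phi (hist @ [w])) + card (neighbours ES (last hist))
           = card (neighbours ES (last hist)) * Phi hist"
    and "neighbours ES (last hist) = insert (tl (last hist)) (Ch (last hist))"
    and "tl (last hist) \<notin> Ch (last hist)"
proof -
  let ?v = "last hist" and ?V = "set hist"
  have VS: "?V \<subseteq> VS" and vV: "?v \<in> ?V" using I by (auto simp: Inv_def)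
  have vVS: "?v \<in> VS" using VS vV by auto
  note rf = random_facts[OF I nU nc]
  show S: "neighbours ES ?v = insert (tl ?v) (Ch ?v)" using nbrs[OF vVS] rf(1) by simp
  show tln: "tl ?v \<notin> Ch ?v" by (auto simp: Ch_def dest: arg_cong[of _ _ length])
  let ?S = "neighbours ES ?v"
  have inV: "w \<in> ?S \<Longrightarrow> w \<in> ?V" for w using Inv_random(2)[OF I nU] by blast
  have Pw: "w \<in> ?S \<Longrightarrow> Phi (hist @ [w]) = FF ?V + TT ?V w" for w
    using inV[of w] by (simp add: Phi_def insert_absorb)
  define k where "k = card (Ch ?v)"
  define s where "s = (\<Sum>c\<in>Ch ?v. NN c)"
  have cS: "card ?S = k + 1" using S tln finite_Ch by (simp add: k_def)
  have Nv: "NN ?v = 1 + s" using NN_split[OF vVS] by (simp add: s_def)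
  have Ttl: "TT ?V (tl ?v) + (2 * NN ?v - 1) = TT ?V ?v" using TT_tl[OF rf(1) vVS rf(2)] .
  have sumc: "(\<Sum>c\<in>Ch ?v. TT ?V c) = k * TT ?V ?v + (\<Sum>c\<in>Ch ?v. 2 * NN c - 1)"
    using TT_child[OF _ vVS rf(3)] by (simp add: sum.distrib k_def)
  have s2: "(\<Sum>c\<in>Ch ?v. 2 * NN c - 1) + k = 2 * s"
  proof -
    have "(\<Sum>c\<in>Ch ?v. (2 * NN c - 1) + 1) = (\<Sum>c\<in>Ch ?v. 2 * NN c - 1) + (\<Sum>c\<in>Ch ?v. 1)"
      by (rule sum.distrib)
    hence "(\<Sum>c\<in>Ch ?v. 2 * NN c - 1) + k = (\<Sum>c\<in>Ch ?v. (2 * NN c - 1) + 1)"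
      by (simp only: k_def card_eq_sum)
    also have "\<dots> = (\<Sum>c\<in>Ch ?v. 2 * NN c)"
      using NN_pos Ch_VS[OF vVS] by (intro sum.cong) (auto, fastforce)
    finally show ?thesis by (simp add: s_def sum_distrib_left)
  qed
  have "(\<Sum>w\<in>?S. Phi (hist @ [w])) = (\<Sum>w\<in>?S. FF ?V + TT ?V w)" using Pw by (rule sum.cong[OF refl])
  also have "\<dots> = card ?S * FF ?V + (\<Sum>w\<in>?S. TT ?V w)" by (simp add: sum.distrib)
  also have "(\<Sum>w\<in>?S. TT ?V w) = TT ?V (tl ?v) + (\<Sum>c\<in>Ch ?v. TT ?V c)"
    using S tln finite_Ch by simp
  finally have "(\<Sum>w\<in>?S. Phi (hist @ [w])) = card ?S * FF ?V + (TT ?V (tl ?v) + (\<Sum>c\<in>Ch ?v. TT ?V c))" .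
  moreover have "Phi hist = FF ?V + TT ?V ?v" by (simp add: Phi_def)
  ultimately show "(\<Sum>w\<in>?S. Phi (hist @ [w])) + card ?S = card ?S * Phi hist"
    using cS Nv Ttl sumc s2 by (simp add: algebra_simps)
qed

lemma ES_eq: "ES = {{x, tl x} | x. x \<in> VS \<and> x \<noteq> []}"
proof (rule set_eqI, rule iffI)
  fix e assume "e \<in> ES"
  then obtain v i where vi: "e = {v, i#v}" "i < d" "length v < h" "set v \<subseteq> {..<d}"
    unfolding tree_edges_def by blast
  hence "i # v \<in> VS" by (simp add: tree_verts_def)
  moreover have "e = {i # v, tl (i # v)}" using vi by (simp add: insert_commute)
  ultimately show "e \<in> {{x, tl x} | x. x \<in> VS \<and> x \<noteq> []}" by blast
next
  fix e assume "e \<in> {{x, tl x} | x. x \<in> VS \<and> x \<noteq> []}"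
  then obtain x where x: "x \<in> VS" "x \<noteq> []" "e = {x, tl x}" by blast
  then obtain i u where xu: "x = i # u" by (cases x) auto
  have "i < d" "length u < h" "set u \<subseteq> {..<d}" using x(1) xu by (auto simp: tree_verts_def)
  moreover have "e = {u, i # u}" using x(3) xu by (simp add: insert_commute)
  ultimately show "e \<in> ES" unfolding tree_edges_def by blast
qed

lemma covered: assumes "Inv hist" "set hist = VS" shows "used_edges hist = ES"
  using assms unfolding Inv_def ES_eq by simp

lemma nbrs_ne: assumes "0 < d" "0 < h" "v \<in> VS" shows "neighbours ES v \<noteq> {}" "finite (neighbours ES v)"
proof -
  show "finite (neighbours ES v)" using nbrs[OF assms(3)] finite_Ch by simp
  show "neighbours ES v \<noteq> {}"
  proof (cases "v = []")
    case True
    hence "[0] \<in> Ch v" using assms by (auto simp: Ch_def)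
    thus ?thesis using nbrs[OF assms(3)] by auto
  next
    case False thus ?thesis using nbrs[OF assms(3)] by auto
  qed
qed

lemma step_support: assumes dh: "0 < d" "0 < h" and I: "Inv hist" and R: "valid_rule ES R"
  and h': "h' \<in> set_pmf (grw_step ES R hist)"
  shows "Inv h'"
proof (cases "last hist \<in> UU (set hist)")
  case True
  hence "unused_at ES hist (last hist) \<noteq> {}" using unused_iff[OF I] by simp
  then obtain w where w: "w \<in> set_pmf (R hist)" and hw: "h' = hist @ [w]"
    using h' by (auto simp: grw_step_def)
  obtain i where "i < d" "w = i # last hist" "length (last hist) < h" "w \<notin> set hist"
    using greedy_choice[OF I R True w] by blast
  thus ?thesis using Inv_greedy[OF I] hw by simp
next
  case False
  hence "unused_at ES hist (last hist) = {}" using unused_iff[OF I] by simp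
  hence "h' \<in> set_pmf (map_pmf (\<lambda>w. hist @ [w]) (pmf_of_set (neighbours ES (last hist))))"
    using h' by (simp add: grw_step_def)
  hence "\<exists>w\<in>set_pmf (pmf_of_set (neighbours ES (last hist))). h' = hist @ [w]" by auto
  then obtain w where w: "w \<in> set_pmf (pmf_of_set (neighbours ES (last hist)))" and hw: "h' = hist @ [w]"
    by blast
  have vVS: "last hist \<in> VS" using I by (auto simp: Inv_def)
  have "w \<in> neighbours ES (last hist)" using w nbrs_ne[OF dh vVS] by simp
  thus ?thesis using Inv_random(1)[OF I \<open>last hist \<notin> UU (set hist)\<close>] hw by simp
qed

lemma nnint_plus1: "(\<integral>\<^sup>+x. f x + 1 \<partial>measure_pmf p) = (\<integral>\<^sup>+x. f x \<partial>measure_pmf p) + 1"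
  by (subst nn_integral_add) (auto simp: measure_pmf.emeasure_space_1)

lemma nnint_le_const: assumes "\<And>x. x \<in> set_pmf p \<Longrightarrow> f x \<le> c"
  shows "(\<integral>\<^sup>+x. f x \<partial>measure_pmf p) \<le> c"
proof -
  have "(\<integral>\<^sup>+x. f x \<partial>measure_pmf p) \<le> (\<integral>\<^sup>+x. c \<partial>measure_pmf p)"
    by (rule nn_integral_mono_AE) (rule AE_pmfI, rule assms)
  also have "\<dots> = c" by (simp add: measure_pmf.emeasure_space_1)
  finally show ?thesis .
qed

lemma step_drift: assumes dh: "0 < d" "0 < h" and I: "Inv hist" and R: "valid_rule ES R"
  shows "(\<integral>\<^sup>+h'. of_nat (Psi h') \<partial>measure_pmf (grw_step ES R hist))
           + (if used_edges hist \<noteq> ES then 1 else 0) \<le> (of_nat (Psi hist) :: ennreal)"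
proof (cases "last hist \<in> UU (set hist)")
  case True
  hence "unused_at ES hist (last hist) \<noteq> {}" using unused_iff[OF I] by simp
  hence gs: "grw_step ES R hist = map_pmf (\<lambda>w. hist @ [w]) (R hist)" by (simp add: grw_step_def)
  have pt: "(of_nat (Psi (hist @ [w])) :: ennreal) + 1 \<le> of_nat (Psi hist)" if w: "w \<in> set_pmf (R hist)" for w
  proof -
    obtain i where i: "i < d" "w = i # last hist" "length (last hist) < h" "w \<notin> set hist"
      using greedy_choice[OF I R True w] by blast
    have gd: "Phi (hist @ [w]) + 1 \<le> Phi hist" using greedy_drift[OF I i(1) i(3)] i by simp
    have vVS: "last hist \<in> VS" using I by (auto simp: Inv_def)
    have "w \<in> VS" using i vVS by (simp add: VS_Cons)
    hence "set hist \<noteq> VS" using i(4) by blast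
    hence "Psi hist = Phi hist" by (simp add: Psi_def)
    moreover have "Psi (hist @ [w]) \<le> Phi (hist @ [w])" by (simp add: Psi_def)
    ultimately have "Psi (hist @ [w]) + 1 \<le> Psi hist" using gd by linarith
    hence "(of_nat (Psi (hist @ [w]) + 1) :: ennreal) \<le> of_nat (Psi hist)" by (simp only: of_nat_le_iff)
    thus ?thesis by (simp add: add.commute)
  qed
  have "(\<integral>\<^sup>+h'. of_nat (Psi h') \<partial>measure_pmf (grw_step ES R hist)) + 1
        = (\<integral>\<^sup>+w. of_nat (Psi (hist @ [w])) + 1 \<partial>measure_pmf (R hist))"
    unfolding gs by (simp add: nnint_plus1)
  also have "\<dots> \<le> of_nat (Psi hist)" by (rule nnint_le_const) (rule pt)
  finally have "(\<integral>\<^sup>+h'. of_nat (Psi h') \<partial>measure_pmf (grw_step ES R hist)) + 1 \<le> (of_nat (Psi hist) :: ennreal)" .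
  moreover have "(if used_edges hist \<noteq> ES then 1 else 0) \<le> (1::ennreal)" by simp
  ultimately show ?thesis by (meson add_left_mono order_trans)
next
  case False
  let ?S = "neighbours ES (last hist)"
  have "unused_at ES hist (last hist) = {}" using unused_iff[OF I] False by simp
  hence gs: "grw_step ES R hist = map_pmf (\<lambda>w. hist @ [w]) (pmf_of_set ?S)" by (simp add: grw_step_def)
  have vVS: "last hist \<in> VS" using I by (auto simp: Inv_def)
  note ne = nbrs_ne[OF dh vVS]
  have wV: "w \<in> ?S \<Longrightarrow> w \<in> set hist" for w using Inv_random(2)[OF I False] by blast
  show ?thesis
  proof (cases "set hist = VS")
    case True
    have "used_edges hist = ES" using covered[OF I True] .
    moreover have "(\<integral>\<^sup>+h'. of_nat (Psi h') \<partial>measure_pmf (grw_step ES R hist)) \<le> (0::ennreal)"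
    proof (rule nnint_le_const)
      fix h' assume "h' \<in> set_pmf (grw_step ES R hist)"
      then obtain w where "w \<in> ?S" "h' = hist @ [w]" using ne unfolding gs by auto
      hence "set h' = VS" using wV True by auto
      thus "(of_nat (Psi h') :: ennreal) \<le> 0" by (simp add: Psi_def)
    qed
    ultimately show ?thesis by simp
  next
    case nc: False
    note rd = random_drift[OF I False nc]
    have Pw: "w \<in> ?S \<Longrightarrow> Psi (hist @ [w]) = Phi (hist @ [w])" for w
      using wV[of w] nc by (simp add: Psi_def insert_absorb)
    have cne: "card ?S \<noteq> 0" using ne by simp
    have "(\<integral>\<^sup>+h'. of_nat (Psi h') \<partial>measure_pmf (grw_step ES R hist)) + 1
        = (\<integral>\<^sup>+w. of_nat (Psi (hist @ [w])) + 1 \<partial>measure_pmf (pmf_of_set ?S))"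
      unfolding gs by (simp add: nnint_plus1)
    also have "\<dots> = (\<Sum>w\<in>?S. of_nat (Psi (hist @ [w])) + 1) / of_nat (card ?S)"
      using ne by (simp add: nn_integral_pmf_of_set)
    also have "(\<Sum>w\<in>?S. (of_nat (Psi (hist @ [w])) :: ennreal) + 1) = of_nat ((\<Sum>w\<in>?S. Phi (hist @ [w])) + card ?S)"
      using Pw by (simp add: sum.distrib)
    also have "\<dots> = of_nat (card ?S) * of_nat (Phi hist)" using rd(1) by simp
    also have "\<dots> / of_nat (card ?S) = of_nat (Phi hist)"
      using cne by (simp add: mult.commute[of "of_nat (card ?S)"] ennreal_mult_divide_eq)
    also have "\<dots> = of_nat (Psi hist)" using nc by (simp add: Psi_def)
    finally have "(\<integral>\<^sup>+h'. of_nat (Psi h') \<partial>measure_pmf (grw_step ES R hist)) + 1 = (of_nat (Psi hist) :: ennreal)" .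
    moreover have "(if used_edges hist \<noteq> ES then 1 else 0) \<le> (1::ennreal)" by simp
    ultimately show ?thesis by (metis add_left_mono)
  qed
qed

lemma grw_hist_0: "grw_hist E R v0 0 = return_pmf [v0]" by (simp add: grw_hist_def)
lemma grw_hist_Suc: "grw_hist E R v0 (Suc t) = bind_pmf (grw_hist E R v0 t) (grw_step E R)"
  by (simp add: grw_hist_def)

lemma hist_support: assumes dh: "0 < d" "0 < h" and R: "valid_rule ES R"
  shows "h' \<in> set_pmf (grw_hist ES R [] t) \<Longrightarrow> Inv h'"
proof (induction t arbitrary: h')
  case 0 thus ?case using Inv_init by (simp add: grw_hist_0)
next
  case (Suc t)
  then obtain g where "g \<in> set_pmf (grw_hist ES R [] t)" "h' \<in> set_pmf (grw_step ES R g)"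
    by (auto simp: grw_hist_Suc)
  thus ?case using Suc.IH step_support[OF dh _ R] by blast
qed

lemma one_step: assumes dh: "0 < d" "0 < h" and R: "valid_rule ES R"
  shows "(\<integral>\<^sup>+g. of_nat (Psi g) \<partial>measure_pmf (grw_hist ES R [] (Suc t)))
         + ennreal (measure_pmf.prob (grw_hist ES R [] t) {g. used_edges g \<noteq> ES})
         \<le> (\<integral>\<^sup>+g. of_nat (Psi g) \<partial>measure_pmf (grw_hist ES R [] t))"
proof -
  let ?M = "measure_pmf (grw_hist ES R [] t)"
  have P: "ennreal (measure_pmf.prob (grw_hist ES R [] t) {g. used_edges g \<noteq> ES})
      = (\<integral>\<^sup>+g. (if used_edges g \<noteq> ES then 1 else 0) \<partial>?M)"
  proof -
    have "(\<integral>\<^sup>+g. (if used_edges g \<noteq> ES then 1 else 0) \<partial>?M) = (\<integral>\<^sup>+g. indicator {g. used_edges g \<noteq> ES} g \<partial>?M)"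
      by (intro nn_integral_cong) (simp add: indicator_def)
    also have "\<dots> = emeasure ?M {g. used_edges g \<noteq> ES}" by simp
    also have "\<dots> = ennreal (measure_pmf.prob (grw_hist ES R [] t) {g. used_edges g \<noteq> ES})"
      by (simp add: measure_pmf.emeasure_eq_measure)
    finally show ?thesis by simp
  qed
  have "(\<integral>\<^sup>+g. of_nat (Psi g) \<partial>measure_pmf (grw_hist ES R [] (Suc t)))
         + ennreal (measure_pmf.prob (grw_hist ES R [] t) {g. used_edges g \<noteq> ES})
      = (\<integral>\<^sup>+g. (\<integral>\<^sup>+h'. of_nat (Psi h') \<partial>measure_pmf (grw_step ES R g)) \<partial>?M)
        + (\<integral>\<^sup>+g. (if used_edges g \<noteq> ES then 1 else 0) \<partial>?M)"
    unfolding P by (simp add: grw_hist_Suc)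
  also have "\<dots> = (\<integral>\<^sup>+g. (\<integral>\<^sup>+h'. of_nat (Psi h') \<partial>measure_pmf (grw_step ES R g))
        + (if used_edges g \<noteq> ES then 1 else 0) \<partial>?M)"
    by (rule nn_integral_add[symmetric]) auto
  also have "\<dots> \<le> (\<integral>\<^sup>+g. of_nat (Psi g) \<partial>?M)"
    by (rule nn_integral_mono_AE, rule AE_pmfI, rule step_drift[OF dh _ R], rule hist_support[OF dh R])
  finally show ?thesis .
qed

lemma accum: assumes dh: "0 < d" "0 < h" and R: "valid_rule ES R"
  shows "(\<integral>\<^sup>+g. of_nat (Psi g) \<partial>measure_pmf (grw_hist ES R [] t))
         + (\<Sum>s<t. ennreal (measure_pmf.prob (grw_hist ES R [] s) {g. used_edges g \<noteq> ES}))
         \<le> of_nat (Psi [[]])"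
proof (induction t)
  case 0 thus ?case by (simp add: grw_hist_0)
next
  case (Suc t)
  let ?a = "\<lambda>t. (\<integral>\<^sup>+g. of_nat (Psi g) \<partial>measure_pmf (grw_hist ES R [] t))"
  let ?P = "\<lambda>s. ennreal (measure_pmf.prob (grw_hist ES R [] s) {g. used_edges g \<noteq> ES})"
  have "?a (Suc t) + (\<Sum>s<Suc t. ?P s) = (?a (Suc t) + ?P t) + (\<Sum>s<t. ?P s)"
    by (simp add: add.assoc add.commute)
  also have "\<dots> \<le> ?a t + (\<Sum>s<t. ?P s)" using one_step[OF dh R, of t] by (rule add_right_mono)
  also have "\<dots> \<le> of_nat (Psi [[]])" using Suc.IH .
  finally show ?case .
qed

lemma ect_bound: assumes dh: "0 < d" "0 < h" and R: "valid_rule ES R"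
  shows "expected_edge_cover_time ES R [] \<le> of_nat (Psi [[]])"
  unfolding expected_edge_cover_time_def
proof (rule suminf_le_const[OF summableI])
  fix t
  have "(\<Sum>s<t. ennreal (measure_pmf.prob (grw_hist ES R [] s) {g. used_edges g \<noteq> ES}))
      \<le> (\<integral>\<^sup>+g. of_nat (Psi g) \<partial>measure_pmf (grw_hist ES R [] t))
         + (\<Sum>s<t. ennreal (measure_pmf.prob (grw_hist ES R [] s) {g. used_edges g \<noteq> ES}))"
    by simp
  also have "\<dots> \<le> of_nat (Psi [[]])" by (rule accum[OF dh R])
  finally show "(\<Sum>s<t. ennreal (measure_pmf.prob (grw_hist ES R [] s) {g. used_edges g \<noteq> ES})) \<le> of_nat (Psi [[]])" .
qed

lemma card_anc: "card {x. x \<in> VS \<and> x \<noteq> [] \<and> isanc x y} \<le> length y"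
proof -
  have "{x. x \<in> VS \<and> x \<noteq> [] \<and> isanc x y} \<subseteq> (\<lambda>k. drop k y) ` {..<length y}"
  proof
    fix x assume x: "x \<in> {x. x \<in> VS \<and> x \<noteq> [] \<and> isanc x y}"
    then obtain zs where zs: "y = zs @ x" "x \<noteq> []" by (auto simp: isanc_def)
    hence "x = drop (length zs) y" "length zs < length y" by auto
    thus "x \<in> (\<lambda>k. drop k y) ` {..<length y}" by blast
  qed
  hence "card {x. x \<in> VS \<and> x \<noteq> [] \<and> isanc x y} \<le> card ((\<lambda>k. drop k y) ` {..<length y})"
    by (rule card_mono[rotated]) simp
  also have "\<dots> \<le> card {..<length y}" by (rule card_image_le) simp
  finally show ?thesis by simp
qed

lemma sum_NN: "(\<Sum>x | x \<in> VS \<and> x \<noteq> []. NN x) \<le> card VS * h"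
proof -
  let ?X = "{x. x \<in> VS \<and> x \<noteq> []}"
  have fX: "finite ?X" by (rule finite_sub_VS)
  have "(\<Sum>x\<in>?X. NN x) = (\<Sum>x\<in>?X. \<Sum>y\<in>VS. if isanc x y then 1 else 0)"
  proof (rule sum.cong[OF refl])
    fix x
    have "NN x = card {y \<in> VS. isanc x y}" by (simp add: NN_def sub_def)
    also have "\<dots> = (\<Sum>y | y \<in> VS \<and> isanc x y. 1)" by simp
    also have "\<dots> = (\<Sum>y\<in>VS. if isanc x y then 1 else 0)"
      using sum.inter_filter[OF finite_VS, of "\<lambda>_. 1::nat" "isanc x"] by simp
    finally show "NN x = (\<Sum>y\<in>VS. if isanc x y then 1 else 0)" .
  qed
  also have "\<dots> = (\<Sum>y\<in>VS. \<Sum>x\<in>?X. if isanc x y then 1 else 0)" by (rule sum.swap)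
  also have "\<dots> = (\<Sum>y\<in>VS. card {x. x \<in> VS \<and> x \<noteq> [] \<and> isanc x y})"
  proof (rule sum.cong[OF refl])
    fix y
    have "(\<Sum>x\<in>?X. if isanc x y then 1 else 0) = (\<Sum>x | x \<in> ?X \<and> isanc x y. 1::nat)"
      using sum.inter_filter[OF fX, of "\<lambda>_. 1::nat" "\<lambda>x. isanc x y"] by simp
    also have "\<dots> = card {x. x \<in> VS \<and> x \<noteq> [] \<and> isanc x y}" by (simp add: conj_assoc)
    finally show "(\<Sum>x\<in>?X. if isanc x y then 1 else 0) = card {x. x \<in> VS \<and> x \<noteq> [] \<and> isanc x y}" .
  qed
  also have "\<dots> \<le> (\<Sum>y\<in>VS. h)"
  proof (rule sum_mono)
    fix y assume "y \<in> VS"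
    hence "length y \<le> h" by (simp add: tree_verts_def)
    thus "card {x. x \<in> VS \<and> x \<noteq> [] \<and> isanc x y} \<le> h" using card_anc[of y] by linarith
  qed
  also have "\<dots> = card VS * h" by simp
  finally show ?thesis .
qed

lemma Psi_init: "Psi [[]] \<le> 2 * (card VS * h) + card VS"
proof -
  have T0: "TT {[]} [] = 0"
  proof -
    have e: "{x. x \<in> VS \<and> x \<noteq> [] \<and> isanc x [] \<and> full {[]} x} = {}" by (auto simp: isanc_def)
    show ?thesis unfolding TT_def e by simp
  qed
  have "(\<Sum>x | x \<in> VS \<and> x \<noteq> [] \<and> \<not> full {[]} x. 2 * NN x) \<le> (\<Sum>x | x \<in> VS \<and> x \<noteq> []. 2 * NN x)"
    by (rule sum_mono2) (auto intro: finite_sub_VS)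
  also have "\<dots> = 2 * (\<Sum>x | x \<in> VS \<and> x \<noteq> []. NN x)" by (simp add: sum_distrib_left)
  also have "\<dots> \<le> 2 * (card VS * h)" using sum_NN by simp
  finally have s: "(\<Sum>x | x \<in> VS \<and> x \<noteq> [] \<and> \<not> full {[]} x. 2 * NN x) \<le> 2 * (card VS * h)" .
  have c: "card (VS - {[]}) \<le> card VS" using finite_VS by (simp add: card_mono)
  have "Psi [[]] \<le> Phi [[]]" by (simp add: Psi_def)
  also have "Phi [[]] = (\<Sum>x | x \<in> VS \<and> x \<noteq> [] \<and> \<not> full {[]} x. 2 * NN x) + card (VS - {[]})"
    by (simp add: Phi_def FF_def T0)
  finally show ?thesis using s c by linarith
qed

lemma card_VS_ge: "d ^ h \<le> card VS"
proof -
  have "{xs. set xs \<subseteq> {..<d} \<and> length xs = h} \<subseteq> VS" by (auto simp: tree_verts_def)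
  hence "card {xs. set xs \<subseteq> {..<d} \<and> length xs = h} \<le> card VS" by (rule card_mono[OF finite_VS])
  thus ?thesis by (simp add: card_lists_length_eq)
qed

end

theorem mainTheorem10:
  shows "\<exists>C::real. C > 0 \<and>
    (\<forall>d h. d \<ge> 2 \<longrightarrow> h \<ge> 1 \<longrightarrow>
      (\<forall>R. valid_rule (tree_edges d h) R \<longrightarrow>
        expected_edge_cover_time (tree_edges d h) R []
          \<le> ennreal (C * real (card (tree_verts d h))
                       * log (real d) (real (card (tree_verts d h))))))"
proof (intro exI[of _ 3] conjI allI impI)
  show "(3::real) > 0" by simp
  fix d h :: nat and R assume d: "d \<ge> 2" and h: "h \<ge> 1" and R: "valid_rule (tree_edges d h) R"
  let ?n = "card (tree_verts d h)"
  have dh: "0 < d" "0 < h" using d h by auto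
  have e1: "expected_edge_cover_time (tree_edges d h) R [] \<le> of_nat (Psi d h [[]])"
    by (rule ect_bound[OF dh R])
  have p: "Psi d h [[]] \<le> 2 * (?n * h) + ?n" by (rule Psi_init)
  have dn: "d ^ h \<le> ?n" by (rule card_VS_ge)
  have dpos: "(0::real) < real d ^ h" using dh by simp
  have "real d ^ h \<le> real ?n" using dn by (metis of_nat_le_iff of_nat_power)
  hence "log (real d) (real d ^ h) \<le> log (real d) (real ?n)"
    using d dpos by (intro log_mono) auto
  moreover have "log (real d) (real d ^ h) = real h" using d by (simp add: log_nat_power)
  ultimately have hl: "real h \<le> log (real d) (real ?n)" by simp
  have "real (Psi d h [[]]) \<le> real (2 * (?n * h) + ?n)" using p by (rule of_nat_mono)
  also have "\<dots> = 2 * (real ?n * real h) + real ?n" by simp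
  also have "\<dots> \<le> 3 * real ?n * real h"
  proof -
    have "1 \<le> real h" using h by simp
    from mult_right_mono[OF this, of "real ?n"] have "real ?n \<le> real h * real ?n" by simp
    thus ?thesis by (simp add: algebra_simps)
  qed
  also have "\<dots> \<le> 3 * real ?n * log (real d) (real ?n)"
    using hl by (intro mult_left_mono) auto
  finally have r: "real (Psi d h [[]]) \<le> 3 * real ?n * log (real d) (real ?n)" .
  have "(of_nat (Psi d h [[]]) :: ennreal) = ennreal (real (Psi d h [[]]))"
    by (simp add: ennreal_of_nat_eq_real_of_nat)
  also have "\<dots> \<le> ennreal (3 * real ?n * log (real d) (real ?n))" using r by (rule ennreal_leI)
  finally show "expected_edge_cover_time (tree_edges d h) R []
          \<le> ennreal (3 * real ?n * log (real d) (real ?n))" using e1 by simp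
qed

end
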